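(* Let $D$ be an integral domain that is not a field. Then $D$ is a RAV-domain if and only if $D$ is an AV-domain and its integral closure $\overline{D}$ is a rational valuation domain.
   Context: For a domain $D$ that is not a field, an element $a\in D$ is an almost uniformizing parameter if for each nonzero nonunit $y\in D$ there are natural numbers $m,n$ and a unit $u$ of $D$ with $y^m=ua^n$; a RAV-domain (rational almost valuation domain) is a domain having an almost uniformizing parameter. An AV-domain is a domain in which for all nonzero $a,b$ there is $n\ge1$ with $a^n\mid b^n$ or $b^n\mid a^n$. A rational valuation domain is a valuation domain whose value group is order-isomorphic to a subgroup of $(\mathbb{Q},+)$. $\overline{D}$ is the integral closure of $D$ in its quotient field. *)

theory Defs
  imports "HOL-Computational_Algebra.Polynomial_Factorial"
begin

text \<open>D is a domain of type 'a :: idom; its quotient field is 'a fract, with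
  canonical embedding to_fract.\<close>

definition not_field :: "'a::idom itself \<Rightarrow> bool" where
  "not_field _ \<longleftrightarrow> (\<exists>x::'a. x \<noteq> 0 \<and> \<not> x dvd 1)"

definition almost_uniformizing :: "'a::idom \<Rightarrow> bool" where
  "almost_uniformizing a \<longleftrightarrow>
     (\<forall>y. y \<noteq> 0 \<and> \<not> y dvd 1 \<longrightarrow>
        (\<exists>m n u. m \<ge> 1 \<and> n \<ge> 1 \<and> u dvd 1 \<and> y ^ m = u * a ^ n))"

definition RAV_domain :: "'a::idom itself \<Rightarrow> bool" where
  "RAV_domain _ \<longleftrightarrow> (\<exists>a::'a. almost_uniformizing a)"

definition AV_domain :: "'a::idom itself \<Rightarrow> bool" where
  "AV_domain _ \<longleftrightarrow> (\<forall>a b::'a. a \<noteq> 0 \<longrightarrow> b \<noteq> 0 \<longrightarrow>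
      (\<exists>n\<ge>1. a ^ n dvd b ^ n \<or> b ^ n dvd a ^ n))"

definition integral_closure :: "'a::idom itself \<Rightarrow> 'a fract set" where
  "integral_closure _ = {x. \<exists>p::'a poly. lead_coeff p = 1 \<and>
      poly (map_poly to_fract p) x = 0}"

definition valuation_ring :: "'k::field set \<Rightarrow> bool" where
  "valuation_ring V \<longleftrightarrow> 0 \<in> V \<and> 1 \<in> V \<and>
     (\<forall>x\<in>V. \<forall>y\<in>V. x + y \<in> V \<and> x * y \<in> V \<and> - x \<in> V) \<and>
     (\<forall>x. x \<noteq> 0 \<longrightarrow> x \<in> V \<or> inverse x \<in> V)"

text \<open>Rational valuation domain: the value group K^*/U(V), ordered by
  divisibility in V, is order-isomorphic to a subgroup of (Q,+).  Equivalently
  (this is just the order embedding composed with the quotient map) there is a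
  valuation v: K^* \<rightarrow> Q, a group homomorphism whose nonnegative part is
  exactly V \ {0}.\<close>
definition rational_valuation_ring :: "'k::field set \<Rightarrow> bool" where
  "rational_valuation_ring V \<longleftrightarrow> valuation_ring V \<and>
     (\<exists>v :: 'k \<Rightarrow> rat.
        (\<forall>x y. x \<noteq> 0 \<longrightarrow> y \<noteq> 0 \<longrightarrow> v (x * y) = v x + v y) \<and>
        (\<forall>x. x \<noteq> 0 \<longrightarrow> (x \<in> V \<longleftrightarrow> v x \<ge> 0)))"

end

theory Submission
  imports Defs
begin


definition span_f :: "(nat \<Rightarrow> 'a::idom fract) \<Rightarrow> nat \<Rightarrow> 'a fract set" where
  "span_f b n = {y. \<exists>c. y = (\<Sum>k<n. to_fract (c k) * b k)}"

lemma nakayama: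
  fixes e :: "'a::idom" and b :: "nat \<Rightarrow> 'a fract"
  assumes loc: "\<And>d. (1 - e * d) dvd 1"
  shows "(\<forall>j<n. \<exists>c. b j = to_fract e * (\<Sum>k<n. to_fract (c k) * b k)) \<Longrightarrow> \<forall>j<n. b j = 0"
proof (induction n)
  case 0
  then show ?case by simp
next
  case (Suc n)
  from Suc.prems have "\<forall>j. \<exists>c. j < Suc n \<longrightarrow> b j = to_fract e * (\<Sum>k<Suc n. to_fract (c k) * b k)"
    by blast
  then have "\<exists>C. \<forall>j. j < Suc n \<longrightarrow> b j = to_fract e * (\<Sum>k<Suc n. to_fract (C j k) * b k)"
    by (rule choice)
  then obtain C where C0: "\<forall>j. j < Suc n \<longrightarrow> b j = to_fract e * (\<Sum>k<Suc n. to_fract (C j k) * b k)"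
    by blast
  have C: "b j = to_fract e * (\<Sum>k<Suc n. to_fract (C j k) * b k)" if "j < Suc n" for j
    using C0 that by blast
  obtain w where w: "1 = (1 - e * C n n) * w" using loc[of "C n n"] by (auto elim: dvdE)
  define S where "S = (\<Sum>k<n. to_fract (C n k) * b k)"
  have "b n = to_fract e * (S + to_fract (C n n) * b n)"
    using C[of n] unfolding S_def by simp
  hence "to_fract (1 - e * C n n) * b n = to_fract e * S"
    by (simp add: algebra_simps)
  hence "to_fract w * (to_fract (1 - e * C n n) * b n) = to_fract w * (to_fract e * S)"
    by simp
  hence "to_fract ((1 - e * C n n) * w) * b n = to_fract e * (to_fract w * S)"
    by (simp only: to_fract_mult mult_ac)
  also have "to_fract w * S = (\<Sum>k<n. to_fract (w * C n k) * b k)"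
    unfolding S_def sum_distrib_left by (simp add: mult_ac)
  finally have bn: "b n = to_fract e * (\<Sum>k<n. to_fract (w * C n k) * b k)"
    using w by simp
  have "\<forall>j<n. \<exists>c. b j = to_fract e * (\<Sum>k<n. to_fract (c k) * b k)"
  proof (intro allI impI)
    fix j assume j: "j < n"
    have "b j = to_fract e * ((\<Sum>k<n. to_fract (C j k) * b k) + to_fract (C j n) * b n)"
      using C[of j] j by simp
    also have "to_fract (C j n) * b n = (\<Sum>k<n. to_fract (C j n * e * w * C n k) * b k)"
      unfolding bn sum_distrib_left by (simp add: mult_ac)
    also have "(\<Sum>k<n. to_fract (C j k) * b k) + (\<Sum>k<n. to_fract (C j n * e * w * C n k) * b k)
       = (\<Sum>k<n. to_fract (C j k + C j n * e * w * C n k) * b k)"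
      by (simp add: sum.distrib[symmetric] distrib_right)
    finally show "\<exists>c. b j = to_fract e * (\<Sum>k<n. to_fract (c k) * b k)"
      by (rule exI[where x="\<lambda>k. C j k + C j n * e * w * C n k"])
  qed
  with Suc.IH have IH: "\<forall>j<n. b j = 0" by blast
  with bn have "b n = 0" by simp
  with IH show ?case using less_Suc_eq by auto
qed

lemma span_add: "x \<in> span_f b n \<Longrightarrow> y \<in> span_f b n \<Longrightarrow> x + y \<in> span_f b n"
  unfolding span_f_def
proof safe
  fix c c' show "\<exists>c''. (\<Sum>k<n. to_fract (c k) * b k) + (\<Sum>k<n. to_fract (c' k) * b k) = (\<Sum>k<n. to_fract (c'' k) * b k)"
    by (rule exI[where x="\<lambda>k. c k + c' k"]) (simp add: sum.distrib algebra_simps)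
qed

lemma span_scal: "x \<in> span_f b n \<Longrightarrow> to_fract d * x \<in> span_f b n"
  unfolding span_f_def
proof safe
  fix c show "\<exists>c'. to_fract d * (\<Sum>k<n. to_fract (c k) * b k) = (\<Sum>k<n. to_fract (c' k) * b k)"
    by (rule exI[where x="\<lambda>k. d * c k"]) (simp add: sum_distrib_left algebra_simps)
qed

lemma span_neg: "x \<in> span_f b n \<Longrightarrow> - x \<in> span_f b n"
  using span_scal[of x b n "-1"] by simp

lemma span_zero: "0 \<in> span_f b n"
  unfolding span_f_def by (rule CollectI, rule exI[where x="\<lambda>_. 0"]) simp

lemma span_sum: "finite A \<Longrightarrow> (\<And>i. i \<in> A \<Longrightarrow> f i \<in> span_f b n) \<Longrightarrow> sum f A \<in> span_f b n"
  by (induction A rule: finite_induct) (auto intro: span_add span_zero)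

abbreviation pspan :: "'a::idom fract \<Rightarrow> nat \<Rightarrow> 'a fract set" where
  "pspan t N \<equiv> span_f (\<lambda>k. t ^ k) N"

lemma pspan_const: "N \<ge> 1 \<Longrightarrow> to_fract d \<in> pspan t N"
  unfolding span_f_def
proof (rule CollectI, rule exI[where x="\<lambda>k. if k = 0 then d else 0"])
  assume "N \<ge> 1"
  then obtain N' where N': "N = Suc N'" by (cases N) auto
  show "to_fract d = (\<Sum>k<N. to_fract (if k = 0 then d else 0) * t ^ k)"
    unfolding N' sum.lessThan_Suc_shift by simp
qed

lemma pspan_mult_t:
  assumes N: "N \<ge> 1" and e: "t ^ N = to_fract e" and x: "x \<in> pspan t N"
  shows "t * x \<in> pspan t N"
proof -
  obtain N' where N': "N = Suc N'" using N by (cases N) auto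
  from x obtain c where c: "x = (\<Sum>k<N. to_fract (c k) * t ^ k)" unfolding span_f_def by blast
  have "t * x = (\<Sum>k<N'. to_fract (c k) * t ^ Suc k) + to_fract (c N') * t ^ N"
    unfolding c N' by (simp add: sum_distrib_left algebra_simps)
  also have "\<dots> = (\<Sum>k<N. to_fract (if k = 0 then c N' * e else c (k - 1)) * t ^ k)"
    unfolding N' sum.lessThan_Suc_shift using e N' by (simp add: algebra_simps)
  finally have eq: "t * x = (\<Sum>k<N. to_fract (if k = 0 then c N' * e else c (k - 1)) * t ^ k)" .
  show ?thesis unfolding span_f_def by (rule CollectI, rule exI, rule eq)
qed

lemma pspan_pow: "N \<ge> 1 \<Longrightarrow> t ^ N = to_fract e \<Longrightarrow> t ^ i \<in> pspan t N"
proof (induction i)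
  case 0
  then show ?case using pspan_const[of N 1 t] by simp
next
  case (Suc i)
  then show ?case using pspan_mult_t[of N t e "t ^ i"] by simp
qed

lemma pspan_mult_pow: "N \<ge> 1 \<Longrightarrow> t ^ N = to_fract e \<Longrightarrow> x \<in> pspan t N \<Longrightarrow> t ^ i * x \<in> pspan t N"
proof (induction i)
  case 0
  then show ?case by simp
next
  case (Suc i)
  then show ?case using pspan_mult_t[of N t e "t ^ i * x"] by (simp add: algebra_simps)
qed

lemma pspan_mult:
  assumes N: "N \<ge> 1" and e: "t ^ N = to_fract e" and x: "x \<in> pspan t N" and y: "y \<in> pspan t N"
  shows "x * y \<in> pspan t N"
proof -
  from x obtain c where c: "x = (\<Sum>k<N. to_fract (c k) * t ^ k)" unfolding span_f_def by blast
  have "x * y = (\<Sum>k<N. to_fract (c k) * (t ^ k * y))" unfolding c sum_distrib_right by (rule sum.cong) (simp_all add: mult.assoc)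
  also have "\<dots> \<in> pspan t N"
    by (rule span_sum) (auto intro!: span_scal pspan_mult_pow[OF N e y])
  finally show ?thesis .
qed

lemma pspan_power: "N \<ge> 1 \<Longrightarrow> t ^ N = to_fract e \<Longrightarrow> x \<in> pspan t N \<Longrightarrow> x ^ i \<in> pspan t N"
  by (induction i) (auto intro: pspan_mult pspan_const[of N 1, simplified])

lemma pspan_poly: "N \<ge> 1 \<Longrightarrow> t ^ N = to_fract e \<Longrightarrow> poly (map_poly to_fract p) t \<in> pspan t N"
proof (induction p)
  case (pCons c p)
  have "poly (map_poly to_fract (pCons c p)) t = to_fract c + t * poly (map_poly to_fract p) t"
    by (simp add: map_poly_pCons)
  also have "\<dots> \<in> pspan t N"
    using pCons by (intro span_add pspan_const pspan_mult_t) auto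
  finally show ?case .
qed (simp add: span_zero)

lemma key_L:
  fixes e :: "'a::idom"
  assumes loc: "\<And>d. (1 - e * d) dvd 1"
    and N: "N \<ge> 1" and e: "t ^ N = to_fract e"
    and p0: "coeff p 0 = 1" and root: "poly (map_poly to_fract p) t = 0"
  shows False
proof -
  obtain q where pq: "p = pCons 1 q" using p0 by (cases p) auto
  define h where "h = - poly (map_poly to_fract q) t"
  have h: "h \<in> pspan t N" unfolding h_def by (intro span_neg pspan_poly[OF N e])
  have "1 + t * poly (map_poly to_fract q) t = 0" using root unfolding pq by (simp add: map_poly_pCons)
  then have th: "t * h = 1" unfolding h_def by (simp add: add_eq_0_iff2)
  have "\<forall>j<N. \<exists>c. t ^ j = to_fract e * (\<Sum>k<N. to_fract (c k) * t ^ k)"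
  proof (intro allI impI)
    fix j assume "j < N"
    have "t ^ j = t ^ j * (t * h) ^ N" using th by simp
    also have "\<dots> = to_fract e * (t ^ j * h ^ N)" using e by (simp add: power_mult_distrib algebra_simps)
    finally have eq: "t ^ j = to_fract e * (t ^ j * h ^ N)" .
    have "t ^ j * h ^ N \<in> pspan t N"
      by (intro pspan_mult_pow[OF N e] pspan_power[OF N e h])
    then obtain c where "t ^ j * h ^ N = (\<Sum>k<N. to_fract (c k) * t ^ k)" unfolding span_f_def by blast
    with eq show "\<exists>c. t ^ j = to_fract e * (\<Sum>k<N. to_fract (c k) * t ^ k)"
      by auto
  qed
  from nakayama[OF loc this] N have "t ^ 0 = 0" by auto
  thus False by simp
qed



lemma dvd_pow_sum:
  fixes a x y :: "'a::comm_ring_1"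
  assumes "a dvd x ^ m" "a dvd y ^ k"
  shows "a dvd (x + y) ^ (m + k)"
proof -
  have "(x + y) ^ (m + k) = (\<Sum>i\<le>m+k. of_nat ((m+k) choose i) * x ^ i * y ^ (m + k - i))"
    by (rule binomial_ring)
  also have "a dvd \<dots>"
  proof (rule dvd_sum)
    fix i assume "i \<in> {..m+k}"
    show "a dvd of_nat ((m+k) choose i) * x ^ i * y ^ (m + k - i)"
    proof (cases "m \<le> i")
      case True
      then have "x ^ m dvd x ^ i" by (rule le_imp_power_dvd)
      with assms(1) have "a dvd x ^ i" by (rule dvd_trans)
      then show ?thesis by (simp add: mult.assoc mult.commute mult.left_commute)
    next
      case False
      then have "k \<le> m + k - i" by simp
      then have "y ^ k dvd y ^ (m + k - i)" by (rule le_imp_power_dvd)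
      with assms(2) have "a dvd y ^ (m + k - i)" by (rule dvd_trans)
      then show ?thesis by simp
    qed
  qed
  finally show ?thesis .
qed

lemma unit_pow: "(u::'a::comm_semiring_1) dvd 1 \<Longrightarrow> u ^ n dvd 1"
  using dvd_power_same[of u 1 n] by simp

lemma unit_mul: "(u::'a::comm_semiring_1) dvd 1 \<Longrightarrow> w dvd 1 \<Longrightarrow> u * w dvd 1"
  using mult_dvd_mono[of u 1 w 1] by simp

locale rav =
  fixes a :: "'a::idom"
  assumes a_nz: "a \<noteq> 0" and a_nu: "\<not> a dvd 1" and au: "almost_uniformizing a"
begin

definition rep :: "'a \<Rightarrow> nat \<Rightarrow> nat \<Rightarrow> bool" where
  "rep y m n \<longleftrightarrow> m \<ge> 1 \<and> (\<exists>u. u dvd 1 \<and> y ^ m = u * a ^ n)"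

lemma exp_unique_aux:
  assumes u: "u dvd 1" and w: "w dvd 1" and eq: "u * a ^ i = w * a ^ j" and ij: "i \<le> j"
  shows "i = j"
proof (rule ccontr)
  assume "i \<noteq> j"
  with ij have ji: "j - i \<ge> 1" by auto
  have "a ^ j = a ^ (j - i) * a ^ i" using ij by (simp add: power_add[symmetric])
  then have "u * a ^ i = (w * a ^ (j - i)) * a ^ i" using eq by (simp add: mult.assoc)
  then have "u = w * a ^ (j - i)" using a_nz by simp
  then have "a ^ (j - i) dvd u" by simp
  then have "a ^ (j - i) dvd 1" using u by (rule dvd_trans)
  moreover have "a dvd a ^ (j - i)" using ji by (cases "j - i") auto
  ultimately show False using a_nu dvd_trans by blast
qed

lemma exp_unique:
  assumes "u dvd 1" "w dvd 1" "u * a ^ i = w * a ^ j" shows "i = j"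
proof (cases "i \<le> j")
  case True then show ?thesis using exp_unique_aux assms by blast
next
  case False then show ?thesis using exp_unique_aux[of w u j i] assms by simp
qed

lemma rep_ex: "y \<noteq> 0 \<Longrightarrow> \<exists>m n. rep y m n"
proof -
  assume y: "y \<noteq> 0"
  show ?thesis
  proof (cases "y dvd 1")
    case True
    then have "rep y 1 0" unfolding rep_def by auto
    then show ?thesis by blast
  next
    case False
    with y au obtain m n u where "m \<ge> 1" "n \<ge> 1" "u dvd 1" "y ^ m = u * a ^ n"
      unfolding almost_uniformizing_def by blast
    then have "rep y m n" unfolding rep_def by blast
    then show ?thesis by blast
  qed
qed

lemma pow_comm: "(y::'a) ^ (m * m') = (y ^ m') ^ m"
  by (subst mult.commute) (rule power_mult)

lemma rep_unique:
  assumes "rep y m n" "rep y m' n'"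
  shows "n * m' = n' * m"
proof -
  from assms obtain u w where u: "u dvd 1" "y ^ m = u * a ^ n" and w: "w dvd 1" "y ^ m' = w * a ^ n'"
    unfolding rep_def by blast
  have "y ^ (m * m') = u ^ m' * a ^ (n * m')"
    by (simp add: power_mult u(2) power_mult_distrib)
  moreover have "y ^ (m * m') = w ^ m * a ^ (n' * m)"
    unfolding pow_comm[of y m m'] unfolding w(2) power_mult_distrib power_mult[of a n' m] ..
  ultimately have "u ^ m' * a ^ (n * m') = w ^ m * a ^ (n' * m)" by simp
  moreover have "u ^ m' dvd 1" "w ^ m dvd 1" using u(1) w(1) by (auto intro: unit_pow)
  ultimately show ?thesis using exp_unique by blast
qed

definition vD :: "'a \<Rightarrow> rat" where
  "vD y = (SOME r. \<exists>m n. rep y m n \<and> r = of_nat n / of_nat m)"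

lemma vD_eq:
  assumes "rep y m n" shows "vD y = of_nat n / of_nat m"
proof -
  have "\<exists>m n. rep y m n \<and> vD y = of_nat n / of_nat m" unfolding vD_def
    by (rule someI_ex[where P="\<lambda>r. \<exists>m n. rep y m n \<and> r = of_nat n / of_nat m"]) (use assms in blast)
  then obtain m' n' where r: "rep y m' n'" "vD y = of_nat n' / of_nat m'" by blast
  have "n' * m = n * m'" using rep_unique[OF r(1) assms] .
  then have eq: "(of_nat n' :: rat) * of_nat m = of_nat n * of_nat m'" by (metis of_nat_mult)
  have "m \<ge> 1" "m' \<ge> 1" using assms r(1) unfolding rep_def by auto
  then have "(of_nat n' :: rat) / of_nat m' = of_nat n / of_nat m" using eq
    by (simp add: frac_eq_eq)
  then show ?thesis using r(2) by simp
qed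

lemma rep_mult:
  assumes "rep y m n" "rep z k l"
  shows "rep (y * z) (m * k) (n * k + l * m)"
proof -
  from assms obtain u w where u: "u dvd 1" "y ^ m = u * a ^ n" and w: "w dvd 1" "z ^ k = w * a ^ l"
    and mk: "m \<ge> 1" "k \<ge> 1"
    unfolding rep_def by blast
  have "(y * z) ^ (m * k) = (y ^ m) ^ k * (z ^ k) ^ m"
    unfolding power_mult_distrib power_mult[of y m k] pow_comm[of z m k] ..
  also have "\<dots> = (u ^ k * w ^ m) * a ^ (n * k + l * m)"
    unfolding u(2) w(2) power_mult_distrib power_add power_mult by (simp add: mult_ac)
  finally have eq: "(y * z) ^ (m * k) = (u ^ k * w ^ m) * a ^ (n * k + l * m)" .
  have un: "u ^ k * w ^ m dvd 1" using u(1) w(1) by (intro unit_mul unit_pow)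
  have "m * k \<ge> 1" using mk by simp
  then show ?thesis unfolding rep_def using eq un by blast
qed

lemma vD_mult:
  assumes "y \<noteq> 0" "z \<noteq> 0" shows "vD (y * z) = vD y + vD z"
proof -
  obtain m n k l where r: "rep y m n" "rep z k l" using rep_ex assms by blast
  have mk: "m \<ge> 1" "k \<ge> 1" using r unfolding rep_def by auto
  have "of_nat (n*k + l*m) / of_nat (m*k) = (of_nat n / of_nat m + of_nat l / of_nat k :: rat)"
    using mk by (simp add: field_simps)
  then show ?thesis using vD_eq[OF rep_mult[OF r]] vD_eq[OF r(1)] vD_eq[OF r(2)]
    by simp
qed

lemma vD_unit: "u dvd 1 \<Longrightarrow> vD u = 0"
  using vD_eq[of u 1 0] unfolding rep_def by auto

lemma vD_one: "vD 1 = 0" by (simp add: vD_unit)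

lemma vD_nonneg: "y \<noteq> 0 \<Longrightarrow> vD y \<ge> 0"
  using rep_ex vD_eq by fastforce

lemma vD_pos:
  assumes "y \<noteq> 0" "\<not> y dvd 1" shows "vD y > 0"
proof -
  from assms au obtain m n u where "m \<ge> 1" "n \<ge> 1" "u dvd 1" "y ^ m = u * a ^ n"
    unfolding almost_uniformizing_def by blast
  then have "rep y m n" "m \<ge> 1" "n \<ge> 1" unfolding rep_def by blast+
  then show ?thesis using vD_eq by simp
qed

lemma vD_le_dvd:
  assumes y: "y \<noteq> 0" and z: "z \<noteq> 0" and le: "vD z \<le> vD y"
  shows "\<exists>N\<ge>1. \<exists>c. y ^ N = c * z ^ N"
proof -
  obtain m n k l where r: "rep y m n" "rep z k l" using rep_ex y z by blast
  from r obtain u w where u: "u dvd 1" "y ^ m = u * a ^ n" and w: "w dvd 1" "z ^ k = w * a ^ l"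
    and mk: "m \<ge> 1" "k \<ge> 1"
    unfolding rep_def by blast
  have "of_nat l / of_nat k \<le> (of_nat n / of_nat m :: rat)" using le vD_eq r by simp
  then have "of_nat l * of_nat m \<le> (of_nat n * of_nat k :: rat)" using mk by (simp add: field_simps)
  then have "of_nat (l * m) \<le> (of_nat (n * k) :: rat)" by simp
  then have lm: "l * m \<le> n * k" by (simp only: of_nat_le_iff)
  from unit_pow[OF w(1), of m] obtain w' where w': "1 = w ^ m * w'" by (rule dvdE)
  have yN: "y ^ (m * k) = u ^ k * a ^ (n * k)"
    by (simp add: power_mult u(2) power_mult_distrib)
  have zN: "z ^ (m * k) = w ^ m * a ^ (l * m)"
    unfolding pow_comm[of z m k] unfolding w(2) power_mult_distrib power_mult[of a l m] ..
  have "(u ^ k * w' * a ^ (n * k - l * m)) * z ^ (m * k) = u ^ k * (w ^ m * w') * (a ^ (n * k - l * m) * a ^ (l * m))"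
    unfolding zN by (simp only: mult_ac)
  also have "\<dots> = y ^ (m * k)" using lm w' yN by (simp add: power_add[symmetric])
  finally have "y ^ (m * k) = (u ^ k * w' * a ^ (n * k - l * m)) * z ^ (m * k)" by (rule sym)
  moreover have "m * k \<ge> 1" using mk by simp
  ultimately show ?thesis by blast
qed

end


lemma fract_rep_ex:
  fixes x :: "'a::idom fract"
  assumes "x \<noteq> 0" shows "\<exists>p q. p \<noteq> 0 \<and> q \<noteq> 0 \<and> x = to_fract p / to_fract q"
proof (cases x)
  case (Fract p q)
  then have "p \<noteq> 0" using assms by (auto simp: eq_fract fract_collapse)
  then show ?thesis using Fract by (auto simp: Fract_conv_to_fract)
qed

lemma fract_eq_cross:
  fixes p q p' q' :: "'a::idom"
  assumes "q \<noteq> 0" "q' \<noteq> 0" "to_fract p / to_fract q = to_fract p' / to_fract q'"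
  shows "p * q' = p' * q"
proof -
  have "to_fract p * to_fract q' = to_fract p' * to_fract q"
    using assms by (simp add: field_simps)
  then show ?thesis by (metis to_fract_mult to_fract_eq_iff)
qed

lemma to_fract_power: "to_fract (x ^ n) = to_fract x ^ n"
  by (induction n) simp_all

context rav begin

definition v :: "'a fract \<Rightarrow> rat" where
  "v x = (let pq = (SOME pq. fst pq \<noteq> 0 \<and> snd pq \<noteq> 0 \<and> x = to_fract (fst pq) / to_fract (snd pq))
          in vD (fst pq) - vD (snd pq))"

lemma v_eq:
  assumes p: "p \<noteq> 0" and q: "q \<noteq> 0"
  shows "v (to_fract p / to_fract q) = vD p - vD q"
proof -
  let ?x = "to_fract p / to_fract q"
  let ?P = "\<lambda>pq. fst pq \<noteq> 0 \<and> snd pq \<noteq> 0 \<and> ?x = to_fract (fst pq) / to_fract (snd pq)"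
  have "?P (p, q)" using p q by simp
  then have P: "?P (SOME pq. ?P pq)" by (rule someI)
  define p' where "p' = fst (SOME pq. ?P pq)"
  define q' where "q' = snd (SOME pq. ?P pq)"
  have v': "v ?x = vD p' - vD q'" unfolding v_def p'_def q'_def Let_def by simp
  from P have p': "p' \<noteq> 0" "q' \<noteq> 0" "?x = to_fract p' / to_fract q'" unfolding p'_def q'_def by auto
  have "p * q' = p' * q" using fract_eq_cross[OF q p'(2) p'(3)] .
  then have "vD p + vD q' = vD p' + vD q" using vD_mult p q p' by metis
  then show ?thesis using v' by simp
qed

lemma v_to_fract: "d \<noteq> 0 \<Longrightarrow> v (to_fract d) = vD d"
  using v_eq[of d 1] by (simp add: vD_one)

lemma v_mult:
  assumes "x \<noteq> 0" "y \<noteq> 0" shows "v (x * y) = v x + v y"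
proof -
  obtain p q where pq: "p \<noteq> 0" "q \<noteq> 0" "x = to_fract p / to_fract q" using fract_rep_ex assms(1) by blast
  obtain p' q' where pq': "p' \<noteq> 0" "q' \<noteq> 0" "y = to_fract p' / to_fract q'" using fract_rep_ex assms(2) by blast
  have xy: "x * y = to_fract (p * p') / to_fract (q * q')" using pq pq' by simp
  have "v (x * y) = vD (p * p') - vD (q * q')" unfolding xy by (rule v_eq) (use pq pq' in auto)
  also have "\<dots> = v x + v y" using pq pq' v_eq vD_mult by simp
  finally show ?thesis .
qed

lemma v_one: "v 1 = 0"
  using v_to_fract[of 1] vD_one by simp

lemma v_inverse: "x \<noteq> 0 \<Longrightarrow> v (inverse x) = - v x"
  using v_mult[of x "inverse x"] v_one by simp

lemma v_power: "x \<noteq> 0 \<Longrightarrow> v (x ^ n) = of_nat n * v x"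
  by (induction n) (auto simp: v_one v_mult algebra_simps)

lemma v_divide: "x \<noteq> 0 \<Longrightarrow> y \<noteq> 0 \<Longrightarrow> v (x / y) = v x - v y"
  using v_mult[of x "inverse y"] v_inverse[of y] by (simp add: divide_inverse)

lemma v_uminus: "x \<noteq> 0 \<Longrightarrow> v (- x) = v x"
proof -
  assume x: "x \<noteq> 0"
  have "v ((-1) * (-1)) = v (-1) + v (-1)" by (rule v_mult) auto
  then have "v (-1) = 0" using v_one by simp
  then show ?thesis using v_mult[of "-1" x] x by simp
qed

lemma v_nonneg_root:
  assumes x: "x \<noteq> 0" and v0: "0 \<le> v x"
  shows "\<exists>N\<ge>1. \<exists>d. x ^ N = to_fract d"
proof -
  obtain p q where pq: "p \<noteq> 0" "q \<noteq> 0" "x = to_fract p / to_fract q" using fract_rep_ex x by blast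
  have "vD q \<le> vD p" using v0 v_eq pq by simp
  then obtain N c where N: "N \<ge> 1" "p ^ N = c * q ^ N" using vD_le_dvd pq by blast
  have "x ^ N = to_fract (p ^ N) / to_fract (q ^ N)" using pq by (simp add: power_divide to_fract_power)
  also have "\<dots> = to_fract c" using N pq by simp
  finally show ?thesis using N by blast
qed

lemma root_v_nonneg:
  assumes x: "x \<noteq> 0" and N: "N \<ge> 1" and d: "x ^ N = to_fract d"
  shows "0 \<le> v x"
proof -
  have "d \<noteq> 0" using x d by auto
  then have "vD d = of_nat N * v x" using v_power[OF x, of N] d v_to_fract by simp
  moreover have "vD d \<ge> 0" using vD_nonneg \<open>d \<noteq> 0\<close> by blast
  ultimately have "of_nat N * v x \<ge> 0" by simp
  then show ?thesis using N by (simp add: zero_le_mult_iff)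
qed

lemma v_pos_root:
  assumes x: "x \<noteq> 0" and v0: "0 < v x"
  shows "\<exists>N\<ge>1. \<exists>d. \<not> d dvd 1 \<and> x ^ N = to_fract d"
proof -
  obtain N d where N: "N \<ge> 1" "x ^ N = to_fract d" using v_nonneg_root[OF x less_imp_le[OF v0]] by blast
  have "d \<noteq> 0" using x N by auto
  then have "vD d = of_nat N * v x" using v_power[OF x, of N] N v_to_fract by simp
  also have "\<dots> > 0" using N v0 by simp
  finally have "\<not> d dvd 1" using vD_unit[of d] by auto
  then show ?thesis using N by blast
qed

lemma nonunit_rad: "\<not> y dvd 1 \<Longrightarrow> \<exists>m\<ge>1. a dvd y ^ m"
proof -
  assume y: "\<not> y dvd 1"
  show ?thesis
  proof (cases "y = 0")
    case True then show ?thesis by (intro exI[of _ 1]) auto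
  next
    case False
    with y au obtain m n u where "m \<ge> 1" "n \<ge> 1" "u dvd 1" "y ^ m = u * a ^ n"
      unfolding almost_uniformizing_def by blast
    moreover have "a dvd a ^ n" using \<open>n \<ge> 1\<close> by (cases n) auto
    ultimately have "a dvd y ^ m" by (simp add: dvd_mult)
    then show ?thesis using \<open>m \<ge> 1\<close> by blast
  qed
qed

lemma local_D:
  fixes e d :: 'a
  assumes e: "\<not> e dvd 1" shows "(1 - e * d) dvd 1"
proof (rule ccontr)
  assume z: "\<not> (1 - e * d) dvd 1"
  have ed: "\<not> (e * d) dvd 1"
  proof
    assume "e * d dvd 1"
    then have "e dvd 1" by (rule dvd_trans[OF dvd_triv_left])
    with e show False by contradiction
  qed
  obtain m where m: "a dvd (1 - e * d) ^ m" using nonunit_rad z by blast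
  obtain k where k: "a dvd (e * d) ^ k" using nonunit_rad ed by blast
  have "a dvd ((1 - e * d) + e * d) ^ (m + k)" by (rule dvd_pow_sum[OF m k])
  then have "a dvd 1" by simp
  with a_nu show False by contradiction
qed

lemma no_root:
  assumes t: "t \<noteq> 0" and vt: "0 < v t" and p0: "coeff p 0 = 1"
    and root: "poly (map_poly to_fract p) t = 0"
  shows False
proof -
  obtain N e where N: "N \<ge> 1" "\<not> e dvd 1" "t ^ N = to_fract e" using v_pos_root[OF t vt] by blast
  show False by (rule key_L[OF local_D[OF N(2)] N(1) N(3) p0 root])
qed

end


lemma degree_fract_poly: "degree (map_poly to_fract p) = degree p"
  by (rule degree_map_poly) simp

lemma fract_poly_reflect: "map_poly to_fract (reflect_poly p) = reflect_poly (map_poly to_fract p)"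
  by (rule poly_eqI) (simp add: coeff_reflect_poly coeff_map_poly degree_fract_poly)

lemma fract_poly_power: "map_poly to_fract (p ^ n) = (map_poly to_fract p) ^ n"
  by (induction n) simp_all

lemma poly_fract: "poly (map_poly to_fract p) (to_fract d) = to_fract (poly p d)"
  by (induction p) (simp_all add: map_poly_pCons)

lemma reflect_root:
  fixes x :: "'a::idom fract"
  assumes x: "x \<noteq> 0" and root: "poly (map_poly to_fract p) x = 0"
  shows "poly (map_poly to_fract (reflect_poly p)) (inverse x) = 0"
  unfolding fract_poly_reflect using x root
  by (simp add: poly_reflect_poly_nz)

lemma in_IC_to_fract: "to_fract d \<in> integral_closure TYPE('a::idom)"
  unfolding integral_closure_def
proof (rule CollectI, rule exI[of _ "[:-d, 1:]"])
  show "lead_coeff [:-d, 1:] = 1 \<and> poly (map_poly to_fract [:- d, 1:]) (to_fract d) = 0"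
    by (simp add: map_poly_pCons)
qed

lemma IC_inverse_unit:
  fixes d :: "'a::idom"
  assumes d: "d \<noteq> 0" and inv: "inverse (to_fract d) \<in> integral_closure TYPE('a)"
  shows "d dvd 1"
proof -
  from inv obtain p :: "'a poly" where p: "lead_coeff p = 1" "poly (map_poly to_fract p) (inverse (to_fract d)) = 0"
    unfolding integral_closure_def by blast
  have "poly (map_poly to_fract (reflect_poly p)) (inverse (inverse (to_fract d))) = 0"
    by (rule reflect_root) (use d p in auto)
  then have "to_fract (poly (reflect_poly p) d) = 0" by (simp add: poly_fract)
  then have r0: "poly (reflect_poly p) d = 0" by simp
  have "coeff (reflect_poly p) 0 = 1" using p by simp
  then obtain r where r: "reflect_poly p = pCons 1 r" by (cases "reflect_poly p") auto
  have "1 + d * poly r d = 0" using r0 unfolding r by simp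
  then have "d * (- poly r d) = 1" by (simp add: add_eq_0_iff2)
  then show ?thesis by (metis dvdI)
qed

context rav begin

definition W :: "'a fract set" where "W = {x. x = 0 \<or> 0 \<le> v x}"

lemma IC_sub_W:
  assumes "x \<in> integral_closure TYPE('a)" shows "x \<in> W"
proof (rule ccontr)
  assume nW: "x \<notin> W"
  then have x: "x \<noteq> 0" and vx: "v x < 0" unfolding W_def by auto
  from assms obtain p :: "'a poly" where p: "lead_coeff p = 1" "poly (map_poly to_fract p) x = 0"
    unfolding integral_closure_def by blast
  have t: "inverse x \<noteq> 0" using x by simp
  have vt: "0 < v (inverse x)" using v_inverse[OF x] vx by simp
  have c0: "coeff (reflect_poly p) 0 = 1" using p by simp
  show False by (rule no_root[OF t vt c0 reflect_root[OF x p(2)]])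
qed

lemma W_sub_IC:
  assumes "x \<in> W" shows "x \<in> integral_closure TYPE('a)"
proof (cases "x = 0")
  case True
  then show ?thesis using in_IC_to_fract[of "0::'a"] by simp
next
  case False
  with assms have "0 \<le> v x" unfolding W_def by auto
  then obtain N d where N: "N \<ge> 1" "x ^ N = to_fract d" using v_nonneg_root False by blast
  define p where "p = [:-d:] + monom (1::'a) N"
  have "degree [:-d:] < degree (monom (1::'a) N)" using N by (simp add: degree_monom_eq)
  then have lc: "lead_coeff p = 1" unfolding p_def by (simp only: lead_coeff_add_le lead_coeff_monom)
  have "poly (map_poly to_fract p) x = x ^ N - to_fract d"
    unfolding p_def by (simp add: map_poly_monom map_poly_pCons poly_monom)
  also have "\<dots> = 0" using N by simp
  finally show ?thesis unfolding integral_closure_def using lc by blast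
qed

lemma IC_eq_W: "integral_closure TYPE('a) = W"
  using IC_sub_W W_sub_IC by blast

lemma W_add_aux:
  assumes x: "x \<noteq> 0" and y: "y \<noteq> 0" and le: "v y \<le> v x" and vy: "0 \<le> v y" and xy: "x + y \<noteq> 0"
  shows "0 \<le> v (x + y)"
proof -
  define t where "t = x / y"
  have t0: "t \<noteq> 0" using x y unfolding t_def by simp
  have vt: "0 \<le> v t" unfolding t_def using v_divide[OF x y] le by simp
  obtain M c where M: "M \<ge> 1" "t ^ M = to_fract c" using v_nonneg_root[OF t0 vt] by blast
  have xyt: "x + y = y * (1 + t)" unfolding t_def using y by (simp add: field_simps)
  have t1: "1 + t \<noteq> 0" using xy xyt by auto
  have v1t: "0 \<le> v (1 + t)"
  proof (rule ccontr)
    assume "\<not> 0 \<le> v (1 + t)"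
    then have neg: "v (1 + t) < 0" by simp
    define s where "s = inverse (1 + t)"
    have s0: "s \<noteq> 0" using t1 unfolding s_def by simp
    have vs: "0 < v s" unfolding s_def using v_inverse[OF t1] neg by simp
    define P where "P = [:1, -1:] ^ M - smult c ([:0, 1:] ^ M)"
    have P0: "coeff P 0 = 1" unfolding P_def using M by (simp add: coeff_0_power)
    have "1 - s = t * s" unfolding s_def using t1 by (simp add: field_simps)
    then have "(1 - s) ^ M = to_fract c * s ^ M" using M by (simp add: power_mult_distrib)
    then have root: "poly (map_poly to_fract P) s = 0"
      unfolding P_def by (simp add: fract_poly_power map_poly_pCons)
    show False by (rule no_root[OF s0 vs P0 root])
  qed
  have "v (x + y) = v y + v (1 + t)" unfolding xyt by (rule v_mult[OF y t1])
  then show ?thesis using vy v1t by simp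
qed

lemma W_add: "x \<in> W \<Longrightarrow> y \<in> W \<Longrightarrow> x + y \<in> W"
proof -
  assume xW: "x \<in> W" and yW: "y \<in> W"
  show "x + y \<in> W"
  proof (cases "x = 0 \<or> y = 0 \<or> x + y = 0")
    case True
    then show ?thesis using xW yW unfolding W_def by auto
  next
    case False
    then have x: "x \<noteq> 0" and y: "y \<noteq> 0" and xy: "x + y \<noteq> 0" by auto
    have vx: "0 \<le> v x" and vy: "0 \<le> v y" using xW yW x y unfolding W_def by auto
    show ?thesis
    proof (cases "v y \<le> v x")
      case True
      then show ?thesis using W_add_aux[OF x y True vy xy] unfolding W_def by simp
    next
      case False
      then have "v x \<le> v y" by simp
      then show ?thesis using W_add_aux[OF y x _ vx] xy unfolding W_def by (simp add: add.commute)
    qed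
  qed
qed

lemma W_mult: "x \<in> W \<Longrightarrow> y \<in> W \<Longrightarrow> x * y \<in> W"
  by (cases "x = 0 \<or> y = 0") (auto simp: W_def v_mult)

lemma W_uminus: "x \<in> W \<Longrightarrow> - x \<in> W"
  by (cases "x = 0") (auto simp: W_def v_uminus)

lemma W_valuation: "valuation_ring W"
  unfolding valuation_ring_def
proof (intro conjI allI impI ballI)
  show "0 \<in> W" unfolding W_def by simp
  show "1 \<in> W" unfolding W_def by (simp add: v_one)
  fix x y assume "x \<in> W" "y \<in> W"
  then show "x + y \<in> W" "x * y \<in> W" "- x \<in> W" by (auto intro: W_add W_mult W_uminus)
next
  fix x :: "'a fract" assume x: "x \<noteq> 0"
  show "x \<in> W \<or> inverse x \<in> W" unfolding W_def using v_inverse[OF x] by auto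
qed

lemma W_rational: "rational_valuation_ring W"
  unfolding rational_valuation_ring_def
proof (intro conjI exI[of _ v])
  show "valuation_ring W" by (rule W_valuation)
  show "\<forall>x y. x \<noteq> 0 \<longrightarrow> y \<noteq> 0 \<longrightarrow> v (x * y) = v x + v y" by (auto simp: v_mult)
  show "\<forall>x. x \<noteq> 0 \<longrightarrow> (x \<in> W) = (0 \<le> v x)" unfolding W_def by auto
qed

lemma AV: "AV_domain TYPE('a)"
  unfolding AV_domain_def
proof (intro allI impI)
  fix x y :: 'a assume x: "x \<noteq> 0" and y: "y \<noteq> 0"
  show "\<exists>n\<ge>1. x ^ n dvd y ^ n \<or> y ^ n dvd x ^ n"
  proof (cases "vD y \<le> vD x")
    case True
    then obtain N c where "N \<ge> 1" "x ^ N = c * y ^ N" using vD_le_dvd[OF x y] by blast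
    then show ?thesis by (metis dvd_triv_right)
  next
    case False
    then have "vD x \<le> vD y" by simp
    then obtain N c where "N \<ge> 1" "y ^ N = c * x ^ N" using vD_le_dvd[OF y x] by blast
    then show ?thesis by (metis dvd_triv_right)
  qed
qed

end


lemma forward:
  assumes nf: "not_field TYPE('a::idom)" and R: "RAV_domain TYPE('a)"
  shows "AV_domain TYPE('a) \<and> rational_valuation_ring (integral_closure TYPE('a))"
proof -
  obtain a :: 'a where au: "almost_uniformizing a" using R unfolding RAV_domain_def by blast
  obtain y :: 'a where y: "y \<noteq> 0" "\<not> y dvd 1" using nf unfolding not_field_def by blast
  from au y obtain m n u where mn: "m \<ge> 1" "n \<ge> 1" "u dvd 1" "y ^ m = u * a ^ n"
    unfolding almost_uniformizing_def by blast
  have a0: "a \<noteq> 0"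
  proof
    assume "a = 0"
    then have "y ^ m = 0" using mn by simp
    then show False using y by simp
  qed
  have a1: "\<not> a dvd 1"
  proof
    assume "a dvd 1"
    then have "a ^ n dvd 1" by (rule unit_pow)
    then have "y ^ m dvd 1" using mn unit_mul by metis
    moreover have "y dvd y ^ m" using mn(1) by (cases m) auto
    ultimately show False using y dvd_trans by blast
  qed
  interpret rav a using a0 a1 au by unfold_locales
  show ?thesis using AV W_rational IC_eq_W by simp
qed

lemma backward:
  assumes nf: "not_field TYPE('a::idom)" and AV: "AV_domain TYPE('a)"
    and RV: "rational_valuation_ring (integral_closure TYPE('a))"
  shows "RAV_domain TYPE('a)"
proof -
  let ?IC = "integral_closure TYPE('a)"
  obtain v :: "'a fract \<Rightarrow> rat" where vm: "\<And>x y. x \<noteq> 0 \<Longrightarrow> y \<noteq> 0 \<Longrightarrow> v (x * y) = v x + v y"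
    and vI: "\<And>x. x \<noteq> 0 \<Longrightarrow> x \<in> ?IC \<longleftrightarrow> 0 \<le> v x"
    using RV unfolding rational_valuation_ring_def by blast
  have v1: "v 1 = 0" using vm[of 1 1] by simp
  have vinv: "v (inverse x) = - v x" if "x \<noteq> 0" for x
    using vm[of x "inverse x"] that v1 by simp
  have vpow: "v (x ^ k) = of_nat k * v x" if "x \<noteq> 0" for x k
    using that by (induction k) (auto simp: v1 vm algebra_simps)
  have vnn: "0 \<le> v (to_fract d)" if "d \<noteq> 0" for d
    using vI[of "to_fract d"] in_IC_to_fract[of d] that by simp
  have vunit: "d dvd 1" if "d \<noteq> 0" "v (to_fract d) = 0" for d
  proof -
    have "0 \<le> v (inverse (to_fract d))" using vinv[of "to_fract d"] that by simp
    then have "inverse (to_fract d) \<in> ?IC" using vI[of "inverse (to_fract d)"] that by simp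
    then show ?thesis using IC_inverse_unit that(1) by blast
  qed
  obtain a0 :: 'a where a0: "a0 \<noteq> 0" "\<not> a0 dvd 1" using nf unfolding not_field_def by blast
  have vpos: "0 < v (to_fract d)" if "d \<noteq> 0" "\<not> d dvd 1" for d
    using vnn[of d] vunit[of d] that by fastforce
  have "almost_uniformizing a0"
    unfolding almost_uniformizing_def
  proof (intro allI impI, elim conjE)
    fix y :: 'a assume y: "y \<noteq> 0" "\<not> y dvd 1"
    define r where "r = v (to_fract y)"
    define s where "s = v (to_fract a0)"
    have r0: "r > 0" unfolding r_def using vpos y by blast
    have s0: "s > 0" unfolding s_def using vpos a0 by blast
    obtain p q where pq: "quotient_of (r / s) = (p, q)" by (cases "quotient_of (r / s)") auto
    have q0: "q > 0" using quotient_of_denom_pos[OF pq] .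
    have rs: "r / s = of_int p / of_int q" using quotient_of_div[OF pq] .
    have "r / s > 0" by (rule divide_pos_pos[OF r0 s0])
    then have "of_int p / of_int q > (0::rat)" using rs by simp
    then have p0: "p > 0" using q0 by (simp add: zero_less_divide_iff)
    define m where "m = nat q"
    define n where "n = nat p"
    have m1: "m \<ge> 1" and n1: "n \<ge> 1" using p0 q0 unfolding m_def n_def by auto
    have "r / s = of_nat n / of_nat m" unfolding rs m_def n_def using p0 q0 by simp
    then have rsmn: "of_nat m * r = of_nat n * s" using s0 m1 by (simp add: field_simps)
    have vyv: "v (to_fract (y ^ m)) = v (to_fract (a0 ^ n))"
      using vpow[of "to_fract y" m] vpow[of "to_fract a0" n] y a0 rsmn
      unfolding r_def s_def by (simp add: to_fract_power)
    have ym: "y ^ m \<noteq> 0" and an: "a0 ^ n \<noteq> 0" using y a0 by auto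
    obtain k where k: "k \<ge> 1" "(y ^ m) ^ k dvd (a0 ^ n) ^ k \<or> (a0 ^ n) ^ k dvd (y ^ m) ^ k"
      using AV ym an unfolding AV_domain_def by blast
    have vk: "v (to_fract ((y ^ m) ^ k)) = v (to_fract ((a0 ^ n) ^ k))"
      using vpow[of "to_fract (y ^ m)" k] vpow[of "to_fract (a0 ^ n)" k] vyv ym an
      by (simp add: to_fract_power)
    define Y where "Y = (y ^ m) ^ k"
    define A where "A = (a0 ^ n) ^ k"
    have Y0: "Y \<noteq> 0" and A0: "A \<noteq> 0" unfolding Y_def A_def using ym an by auto
    have vYA: "v (to_fract Y) = v (to_fract A)" using vk unfolding Y_def A_def .
    have unit_quot: "w dvd 1" if "X = Z * w" "X \<noteq> 0" "v (to_fract X) = v (to_fract Z)" for X Z w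
    proof -
      have "w \<noteq> 0" "Z \<noteq> 0" using that by auto
      then have "v (to_fract X) = v (to_fract Z) + v (to_fract w)" using that(1) vm by simp
      then have "v (to_fract w) = 0" using that(3) by simp
      then show ?thesis using vunit \<open>w \<noteq> 0\<close> by blast
    qed
    have "\<exists>u. u dvd 1 \<and> Y = u * A"
    proof (cases "A dvd Y")
      case True
      then obtain w where w: "Y = A * w" by (rule dvdE)
      have "w dvd 1" by (rule unit_quot[OF w Y0 vYA])
      then show ?thesis using w by (auto simp: mult.commute)
    next
      case False
      then have "Y dvd A" using k(2) unfolding Y_def A_def by blast
      then obtain w where w: "A = Y * w" by (rule dvdE)
      have "w dvd 1" by (rule unit_quot[OF w A0 vYA[symmetric]])
      then obtain w' where w': "1 = w * w'" by (rule dvdE)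
      have "Y = w' * A" using w w' by (metis mult.assoc mult.commute mult_1_right)
      moreover have "w' dvd 1" using w' by (metis dvdI mult.commute)
      ultimately show ?thesis by blast
    qed
    then obtain u where u: "u dvd 1" "y ^ (m * k) = u * a0 ^ (n * k)"
      unfolding Y_def A_def by (auto simp: power_mult)
    have "m * k \<ge> 1" "n * k \<ge> 1" using m1 n1 k(1) by auto
    then show "\<exists>m n u. m \<ge> 1 \<and> n \<ge> 1 \<and> u dvd 1 \<and> y ^ m = u * a0 ^ n" using u by blast
  qed
  then show ?thesis unfolding RAV_domain_def by blast
qed

theorem theorem11:
  assumes "not_field TYPE('a::idom)"
  shows "RAV_domain TYPE('a) \<longleftrightarrow>
           (AV_domain TYPE('a) \<and> rational_valuation_ring (integral_closure TYPE('a)))"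
  using forward[OF assms] backward[OF assms] by blast


end
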